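(* Let $\mathcal{G}^{\mathbb{c}}=(\mathbb{C},\mathbb{E}^{\mathbb{c}})$ be a C-DMG and $\mathbb{C}_\mathbb{X},\mathbb{C}_\mathbb{Y},\mathbb{C}_\mathbb{Z},\mathbb{C}_\mathbb{W}$ pairwise disjoint subsets of $\mathbb{C}$; for a compatible ADMG let $\mathbb{X},\mathbb{Y},\mathbb{Z},\mathbb{W}$ denote the unions of the clusters in $\mathbb{C}_\mathbb{X},\mathbb{C}_\mathbb{Y},\mathbb{C}_\mathbb{Z},\mathbb{C}_\mathbb{W}$ respectively. Assume that either (i) the sizes of the clusters are unknown (compatible ADMGs may have clusters of any nonempty sizes), or (ii) every cluster contains more than one variable. Then: (1) if $\mathbb{C}_\mathbb{Y}$ and $\mathbb{C}_\mathbb{X}$ are not d-separated by $\mathbb{C}_\mathbb{Z}\cup\mathbb{C}_\mathbb{W}$ in $\mathcal{G}^{\mathbb{c}}_{\overline{\mathbb{C}_\mathbb{Z}}}$, there exists a compatible ADMG $\mathcal{G}$ in which $\mathbb{Y}$ and $\mathbb{X}$ are not d-separated by $\mathbb{Z}\cup\mathbb{W}$ in $\mathcal{G}_{\overline{\mathbb{Z}}}$; (2) if $\mathbb{C}_\mathbb{Y}$ and $\mathbb{C}_\mathbb{X}$ are not d-separated by $\mathbb{C}_\mathbb{Z}\cup\mathbb{C}_\mathbb{W}$ in $\mathcal{G}^{\mathbb{c}}_{\overline{\mathbb{C}_\mathbb{Z}}\underline{\mathbb{C}_\mathbb{X}}}$, there exists a compatible ADMG $\mathcal{G}$ in which $\mathbb{Y}$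 and $\mathbb{X}$ are not d-separated by $\mathbb{Z}\cup\mathbb{W}$ in $\mathcal{G}_{\overline{\mathbb{Z}}\underline{\mathbb{X}}}$; (3) if $\mathbb{C}_\mathbb{Y}$ and $\mathbb{C}_\mathbb{X}$ are not d-separated by $\mathbb{C}_\mathbb{Z}\cup\mathbb{C}_\mathbb{W}$ in $\mathcal{G}^{\mathbb{c}}_{\overline{\mathbb{C}_\mathbb{Z}}\,\overline{\mathbb{C}_\mathbb{X}(\mathbb{C}_\mathbb{W})}}$, there exists a compatible ADMG $\mathcal{G}$ in which $\mathbb{Y}$ and $\mathbb{X}$ are not d-separated by $\mathbb{Z}\cup\mathbb{W}$ in $\mathcal{G}_{\overline{\mathbb{Z}}\,\overline{\mathbb{X}(\mathbb{W})}}$. That is, whenever one of the three do-calculus rules does not apply in $\mathcal{G}^{\mathbb{c}}$, there is a compatible ADMG in which the corresponding classical do-calculus rule does not apply.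
   Context: An ADMG is a graph with directed and bidirected edges whose directed edges form no directed cycle. A C-DMG $\mathcal{G}^{\mathbb{c}}=(\mathbb{C},\mathbb{E}^{\mathbb{c}})$ compatible with an ADMG $\mathcal{G}=(\mathbb{V},\mathbb{E})$ has as vertex set a partition $\mathbb{C}$ of $\mathbb{V}$ into clusters, with $C_i\rightarrow C_j$ (resp. $C_i\leftrightarrow C_j$), possibly $i=j$, an edge iff some $X\in C_i$, $Y\in C_j$ have $X\rightarrow Y$ (resp. $X\leftrightarrow Y$) in $\mathcal{G}$; C-DMGs may have directed cycles and self-loops. For a graph $\mathcal{G}^*$ and vertex sets $\mathbb{A},\mathbb{B}$, $\mathcal{G}^*_{\overline{\mathbb{A}}\underline{\mathbb{B}}}$ is obtained by removing all edges coming into $\mathbb{A}$ (directed edges with head in $\mathbb{A}$ and bidirected edges with an endpoint in $\mathbb{A}$) and all directed edges going out of $\mathbb{B}$. $\mathbb{C}_\mathbb{X}(\mathbb{C}_\mathbb{W})$ is the set of vertices of $\mathbb{C}_\mathbb{X}$ that are not ancestors of any vertex of $\mathbb{C}_\mathbb{W}$ in $\mathcal{G}^{\mathbb{c}}_{\overline{\mathbb{C}_\mathbb{Z}}}$; similarly $\mathbb{X}(\mathbb{W})$ is the set of vertices of $\mathbb{X}$ that are not ancestors of any vertex of $\mathbb{W}$ in $\mathcal{G}_{\overline{\mathbb{Z}}}$. Ancestors/descendants include the vertex itself. A walk $\langle V_1,\dots,V_n\rangle$ is blocked by $\mathbb{W}^*$ if $V_1\in\mathbb{W}^*$ or $V_n\in\mathbb{W}^*$;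 or for some $1<i<n$ the walk contains $V_{i-1}\,*\!-\!*\,V_i\rightarrow V_{i+1}$ or $V_{i-1}\leftarrow V_i\,*\!-\!*\,V_{i+1}$ (any edge type for $*\!-\!*$) with $V_i\in\mathbb{W}^*$; or for some $1<i<n$ it contains $V_{i-1}\,*\!\!\rightarrow V_i\leftarrow\!\!*\,V_{i+1}$ (edges directed into $V_i$ or bidirected) with no descendant of $V_i$ in $\mathbb{W}^*$. A path is a walk without repeated vertices; $\mathbb{W}^*$ d-separates $\mathbb{X}^*$ and $\mathbb{Y}^*$ if it blocks every path between a vertex of $\mathbb{X}^*$ and a vertex of $\mathbb{Y}^*$. *)

theory Defs
  imports Main
begin

text \<open>Mixed graphs: a vertex set, directed edges (u,v) meaning u -> v,
  bidirected edges (stored symmetrically).\<close>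
record 'a mgraph =
  verts :: "'a set"
  dir :: "('a \<times> 'a) set"
  bid :: "('a \<times> 'a) set"

text \<open>Kind of the edge between consecutive vertices V_i, V_(i+1) of a walk:
  Fwd: V_i -> V_(i+1); Bwd: V_i <- V_(i+1); Bi: V_i <-> V_(i+1).\<close>
datatype ekind = Fwd | Bwd | Bi

definition walk :: "'a mgraph \<Rightarrow> 'a list \<Rightarrow> ekind list \<Rightarrow> bool" where
  "walk G vs es \<longleftrightarrow> vs \<noteq> [] \<and> set vs \<subseteq> verts G \<and> length es = length vs - 1 \<and>
     (\<forall>i<length es. (case es ! i of
         Fwd \<Rightarrow> (vs ! i, vs ! Suc i) \<in> dir G
       | Bwd \<Rightarrow> (vs ! Suc i, vs ! i) \<in> dir G
       | Bi \<Rightarrow> (vs ! i, vs ! Suc i) \<in> bid G))"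

definition path :: "'a mgraph \<Rightarrow> 'a list \<Rightarrow> ekind list \<Rightarrow> bool" where
  "path G vs es \<longleftrightarrow> walk G vs es \<and> distinct vs"

definition desc :: "'a mgraph \<Rightarrow> 'a \<Rightarrow> 'a set" where
  "desc G v = {u. (v, u) \<in> (dir G)\<^sup>*}"

definition blocked :: "'a mgraph \<Rightarrow> 'a set \<Rightarrow> 'a list \<Rightarrow> ekind list \<Rightarrow> bool" where
  "blocked G W vs es \<longleftrightarrow> hd vs \<in> W \<or> last vs \<in> W \<or>
     (\<exists>i. 0 < i \<and> i < length vs - 1 \<and>
        (((es ! i = Fwd \<or> es ! (i - 1) = Bwd) \<and> vs ! i \<in> W) \<or>
         (es ! (i - 1) \<in> {Fwd, Bi} \<and> es ! i \<in> {Bwd, Bi} \<and> desc G (vs ! i) \<inter> W = {})))"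

definition dsep :: "'a mgraph \<Rightarrow> 'a set \<Rightarrow> 'a set \<Rightarrow> 'a set \<Rightarrow> bool" where
  "dsep G X Y W \<longleftrightarrow>
     (\<forall>vs es. path G vs es \<and> hd vs \<in> X \<and> last vs \<in> Y \<longrightarrow> blocked G W vs es)"

definition mutilate :: "'a mgraph \<Rightarrow> 'a set \<Rightarrow> 'a set \<Rightarrow> 'a mgraph" where
  "mutilate G A B = G\<lparr>dir := {(u, v) \<in> dir G. v \<notin> A \<and> u \<notin> B},
                      bid := {(u, v) \<in> bid G. u \<notin> A \<and> v \<notin> A}\<rparr>"

definition nonanc :: "'a mgraph \<Rightarrow> 'a set \<Rightarrow> 'a set \<Rightarrow> 'a set" where
  "nonanc G S T = {x \<in> S. \<forall>w\<in>T. (x, w) \<notin> (dir G)\<^sup>*}"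

definition admg :: "'a mgraph \<Rightarrow> bool" where
  "admg G \<longleftrightarrow> finite (verts G) \<and> dir G \<subseteq> verts G \<times> verts G \<and>
     bid G \<subseteq> verts G \<times> verts G \<and> sym (bid G) \<and> (\<forall>x. (x, x) \<notin> bid G) \<and>
     acyclic (dir G)"

definition cdmg :: "'c mgraph \<Rightarrow> bool" where
  "cdmg Gc \<longleftrightarrow> finite (verts Gc) \<and> dir Gc \<subseteq> verts Gc \<times> verts Gc \<and>
     bid Gc \<subseteq> verts Gc \<times> verts Gc \<and> sym (bid Gc)"

text \<open>ADMGs over vertices (c, i): the vertex (c, i) belongs to cluster c.
  Compatibility: the clusters {v. fst v = c} (c a cluster) are nonempty and partition
  the vertex set, and cluster edges are exactly the images of variable edges.\<close>
definition compatible :: "'c mgraph \<Rightarrow> ('c \<times> nat) mgraph \<Rightarrow> bool" where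
  "compatible Gc G \<longleftrightarrow> admg G \<and> fst ` verts G = verts Gc \<and>
     dir Gc = map_prod fst fst ` dir G \<and> bid Gc = map_prod fst fst ` bid G"

definition members :: "('c \<times> nat) mgraph \<Rightarrow> 'c set \<Rightarrow> ('c \<times> nat) set" where
  "members G S = {v \<in> verts G. fst v \<in> S}"

text \<open>Cluster size regime: multi = False is case (i) (any nonempty sizes);
  multi = True is case (ii) (every cluster has more than one variable).\<close>
definition size_ok :: "bool \<Rightarrow> 'c mgraph \<Rightarrow> ('c \<times> nat) mgraph \<Rightarrow> bool" where
  "size_ok multi Gc G \<longleftrightarrow> (multi \<longrightarrow> (\<forall>c\<in>verts Gc. card {v \<in> verts G. fst v = c} \<ge> 2))"

end

theory Submission imports Defs begin

lemma rtrancl_bounded: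
  assumes "finite R" "(a,b) \<in> R\<^sup>*"
  shows "\<exists>k\<le>card R. (a,b) \<in> R ^^ k"
proof (cases "a = b")
  case True then show ?thesis by (intro exI[of _ 0]) auto
next
  case False
  then have "(a,b) \<in> R\<^sup>+" using assms(2) by (meson rtranclD)
  then show ?thesis using trancl_finite_eq_relpow[OF assms(1)] by auto
qed

lemma lift_pow:
  assumes h: "\<And>u v s. (u,v) \<in> R \<Longrightarrow> Suc s < N0 \<Longrightarrow> ((u,s),(v,Suc s)) \<in> R'"
  shows "(u,v) \<in> R ^^ k \<Longrightarrow> t + k < N0 \<Longrightarrow> ((u,t),(v,t+k)) \<in> R'\<^sup>*"
proof (induction k arbitrary: v)
  case 0 then show ?case by simp
next
  case (Suc k)
  then obtain w where w: "(u,w) \<in> R ^^ k" "(w,v) \<in> R" by auto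
  with Suc have "((u,t),(w,t+k)) \<in> R'\<^sup>*" by simp
  moreover have "((w,t+k),(v,Suc (t+k))) \<in> R'" using h w Suc by simp
  ultimately show ?case by (simp add: rtrancl_into_rtrancl)
qed

definition tau :: "ekind list \<Rightarrow> nat \<Rightarrow> nat" where
  "tau es i = length es + length (filter (\<lambda>e. e = Fwd) (take i es))
      - length (filter (\<lambda>e. e = Bwd) (take i es))"

lemma tau_le: "tau es i \<le> 2 * length es"
proof -
  have "length (filter (\<lambda>e. e = Fwd) (take i es)) \<le> length es"
    by (metis length_filter_le length_take min.bounded_iff order_trans nle_le)
  then show ?thesis unfolding tau_def by linarith
qed

lemma tau_step:
  assumes "i < length es"
  shows "(es!i = Fwd \<longrightarrow> tau es (Suc i) = Suc (tau es i)) \<and>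
         (es!i = Bwd \<longrightarrow> tau es i = Suc (tau es (Suc i))) \<and>
         (es!i = Bi \<longrightarrow> tau es (Suc i) = tau es i)"
proof -
  have t: "take (Suc i) es = take i es @ [es!i]" using assms by (simp add: take_Suc_conv_app_nth)
  have b1: "length (filter (\<lambda>e. e = Bwd) (take (Suc i) es)) \<le> length es"
    by (metis length_filter_le length_take min.bounded_iff order_trans nle_le)
  have b2: "length (filter (\<lambda>e. e = Bwd) (take i es)) \<le> length es"
    by (metis length_filter_le length_take min.bounded_iff order_trans nle_le)
  show ?thesis using b1 b2 unfolding tau_def t by auto
qed


definition liftp :: "'c list \<Rightarrow> ekind list \<Rightarrow> ('c \<times> nat) list" where
  "liftp vs es = map (\<lambda>i. (vs!i, tau es i)) [0..<length vs]"

lemma main: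
  fixes Hc :: "'c mgraph" and H :: "('c \<times> nat) mgraph"
  assumes p: "path Hc vs es" and nb: "\<not> blocked Hc Wc vs es"
  and fin: "finite (dir Hc)" and K: "card (dir Hc) \<le> K"
  and N0: "2 * length es + K < N0"
  and hv: "\<And>u s. u \<in> verts Hc \<Longrightarrow> s < N0 \<Longrightarrow> (u,s) \<in> verts H"
  and hdir: "\<And>u v s. (u,v) \<in> dir Hc \<Longrightarrow> Suc s < N0 \<Longrightarrow> ((u,s),(v,Suc s)) \<in> dir H"
  and hbid: "\<And>u v s t. (u,v) \<in> bid Hc \<Longrightarrow> s < N0 \<Longrightarrow> t < N0 \<Longrightarrow> u \<noteq> v \<Longrightarrow> ((u,s),(v,t)) \<in> bid H"
  and hW1: "\<And>u s. (u,s) \<in> Wv \<Longrightarrow> u \<in> Wc"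
  and hW2: "\<And>u s. u \<in> Wc \<Longrightarrow> s < N0 \<Longrightarrow> (u,s) \<in> Wv"
  shows "path H (liftp vs es) es \<and> \<not> blocked H Wv (liftp vs es) es
     \<and> hd (liftp vs es) = (hd vs, tau es 0) \<and> last (liftp vs es) = (last vs, tau es (length es))
     \<and> tau es 0 < N0 \<and> tau es (length es) < N0"
proof -
  let ?vs = "liftp vs es"
  have w: "walk Hc vs es" and d: "distinct vs" using p by (auto simp: path_def)
  have ne: "vs \<noteq> []" and sv: "set vs \<subseteq> verts Hc" and len: "length es = length vs - 1"
    and ed: "\<forall>i<length es. (case es ! i of
         Fwd \<Rightarrow> (vs ! i, vs ! Suc i) \<in> dir Hc
       | Bwd \<Rightarrow> (vs ! Suc i, vs ! i) \<in> dir Hc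
       | Bi \<Rightarrow> (vs ! i, vs ! Suc i) \<in> bid Hc)" using w by (auto simp: walk_def)
  have lv: "length vs = Suc (length es)" using ne len by (cases vs) auto
  have nth: "\<And>i. i < length vs \<Longrightarrow> ?vs ! i = (vs!i, tau es i)" by (simp add: liftp_def)
  have lvs: "length ?vs = length vs" by (simp add: liftp_def)
  have tl: "\<And>i. tau es i < N0" using tau_le N0 by (meson le_less_trans le_add1 le_trans less_imp_le_nat not_le)
  have mf: "map fst ?vs = vs" by (simp add: liftp_def comp_def map_nth)
  have hdv: "hd ?vs = (hd vs, tau es 0)"
    using nth[of 0] ne lvs by (metis hd_conv_nth length_greater_0_conv list.size(3))
  have lsv: "last ?vs = (last vs, tau es (length es))"
    using nth[of "length es"] ne lvs lv proof -
    have "?vs \<noteq> []" using lvs ne by auto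
    then have "last ?vs = ?vs ! length es" using lvs lv by (simp add: last_conv_nth)
    moreover have "last vs = vs ! length es" using ne lv by (simp add: last_conv_nth)
    ultimately show ?thesis using nth[of "length es"] lv by simp
  qed
  have dv: "distinct ?vs" using d mf by (metis distinct_map)
  have wv: "walk H ?vs es"
    unfolding walk_def
  proof (intro conjI allI impI)
    show "?vs \<noteq> []" using ne lvs by auto
    show "set ?vs \<subseteq> verts H"
    proof
      fix x assume "x \<in> set ?vs"
      then obtain i where "i < length vs" "x = ?vs ! i" using lvs by (metis in_set_conv_nth)
      then show "x \<in> verts H" using nth hv sv tl by (simp add: subset_iff)
    qed
    show "length es = length ?vs - 1" using lvs len by simp
    fix i assume i: "i < length es"
    have ts: "(es!i = Fwd \<longrightarrow> tau es (Suc i) = Suc (tau es i)) \<and>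
         (es!i = Bwd \<longrightarrow> tau es i = Suc (tau es (Suc i))) \<and>
         (es!i = Bi \<longrightarrow> tau es (Suc i) = tau es i)" using tau_step[OF i] .
    have neq: "vs!i \<noteq> vs!Suc i" using d i lv by (simp add: nth_eq_iff_index_eq)
    have e: "case es ! i of
         Fwd \<Rightarrow> (vs ! i, vs ! Suc i) \<in> dir Hc
       | Bwd \<Rightarrow> (vs ! Suc i, vs ! i) \<in> dir Hc
       | Bi \<Rightarrow> (vs ! i, vs ! Suc i) \<in> bid Hc" using ed i by blast
    have i1: "i < length vs" "Suc i < length vs" using i lv by auto
    have t1: "tau es i < N0" "tau es (Suc i) < N0" using tl by auto
    show "case es ! i of Fwd \<Rightarrow> (?vs ! i, ?vs ! Suc i) \<in> dir H | Bwd \<Rightarrow> (?vs ! Suc i, ?vs ! i) \<in> dir H | Bi \<Rightarrow> (?vs ! i, ?vs ! Suc i) \<in> bid H"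
    proof (cases "es!i")
      case Fwd
      then have "(vs ! i, vs ! Suc i) \<in> dir Hc" using e by simp
      then have "((vs ! i, tau es i), (vs ! Suc i, Suc (tau es i))) \<in> dir H"
        using hdir t1 ts Fwd by auto
      then show ?thesis using Fwd ts nth[OF i1(1)] nth[OF i1(2)] by simp
    next
      case Bwd
      then have "(vs ! Suc i, vs ! i) \<in> dir Hc" using e by simp
      then have "((vs ! Suc i, tau es (Suc i)), (vs ! i, Suc (tau es (Suc i)))) \<in> dir H"
        using hdir t1 ts Bwd by auto
      then show ?thesis using Bwd ts nth[OF i1(1)] nth[OF i1(2)] by simp
    next
      case Bi
      then have "(vs ! i, vs ! Suc i) \<in> bid Hc" using e by simp
      then have "((vs ! i, tau es i), (vs ! Suc i, tau es (Suc i))) \<in> bid H"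
        using hbid t1 neq by auto
      then show ?thesis using Bi nth[OF i1(1)] nth[OF i1(2)] by simp
    qed
  qed
  have pv: "path H ?vs es" using wv dv by (simp add: path_def)
  have nbv: "\<not> blocked H Wv ?vs es"
  proof
    assume "blocked H Wv ?vs es"
    then consider "hd ?vs \<in> Wv" | "last ?vs \<in> Wv" |
      i where "0 < i" "i < length ?vs - 1" "(es ! i = Fwd \<or> es ! (i - 1) = Bwd) \<and> ?vs ! i \<in> Wv" |
      i where "0 < i" "i < length ?vs - 1" "es ! (i - 1) \<in> {Fwd, Bi}" "es ! i \<in> {Bwd, Bi}"
         "desc H (?vs ! i) \<inter> Wv = {}"
      unfolding blocked_def by blast
    then show False
    proof cases
      case 1 then show False using hdv hW1 nb unfolding blocked_def by auto
    next
      case 2 then show False using lsv hW1 nb unfolding blocked_def by auto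
    next
      case (3 i)
      have il: "i < length vs" using 3 lvs by simp
      have "vs ! i \<in> Wc" using 3 nth[OF il] hW1 by auto
      then show False using 3 nb lvs unfolding blocked_def by auto
    next
      case (4 i)
      have il: "i < length vs" using 4 lvs by simp
      have "\<not> desc Hc (vs ! i) \<inter> Wc = {}" using nb 4 lvs unfolding blocked_def by auto
      then obtain dd where dd: "dd \<in> Wc" "(vs!i, dd) \<in> (dir Hc)\<^sup>*" unfolding desc_def by auto
      obtain k where k: "k \<le> card (dir Hc)" "(vs!i, dd) \<in> dir Hc ^^ k"
        using rtrancl_bounded[OF fin dd(2)] by blast
      have tk: "tau es i + k < N0" using tau_le[of es i] k K N0 by linarith
      have "((vs!i, tau es i), (dd, tau es i + k)) \<in> (dir H)\<^sup>*"
        using lift_pow[of "dir Hc" N0 "dir H", OF hdir k(2) tk] by blast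
      then have "(dd, tau es i + k) \<in> desc H (?vs ! i)" using nth[OF il] by (simp add: desc_def)
      moreover have "(dd, tau es i + k) \<in> Wv" using hW2 dd tk by blast
      ultimately show False using 4 by blast
    qed
  qed
  show ?thesis using pv nbv hdv lsv tl by blast
qed


definition liftg :: "'c mgraph \<Rightarrow> nat \<Rightarrow> ('c \<times> nat) mgraph" where
  "liftg Gc N = \<lparr>verts = verts Gc \<times> {..<N},
     dir = {((c,t),(d,t')). (c,d) \<in> dir Gc \<and> t' = Suc t \<and> t' < N},
     bid = {((c,t),(d,t')). (c,d) \<in> bid Gc \<and> t < N \<and> t' < N \<and> (c,t) \<noteq> (d,t')}\<rparr>"

lemma liftg_simps:
  "verts (liftg Gc N) = verts Gc \<times> {..<N}"
  "(((c,t),(d,t')) \<in> dir (liftg Gc N)) \<longleftrightarrow> (c,d) \<in> dir Gc \<and> t' = Suc t \<and> t' < N"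
  "(((c,t),(d,t')) \<in> bid (liftg Gc N)) \<longleftrightarrow> (c,d) \<in> bid Gc \<and> t < N \<and> t' < N \<and> (c,t) \<noteq> (d,t')"
  by (auto simp: liftg_def)

lemma members_liftg: "(v \<in> members (liftg Gc N) S) \<longleftrightarrow> fst v \<in> S \<and> fst v \<in> verts Gc \<and> snd v < N"
  by (cases v) (auto simp: members_def liftg_def)

lemma compat:
  assumes c: "cdmg Gc" and N: "2 \<le> N"
  shows "compatible Gc (liftg Gc N) \<and> size_ok multi Gc (liftg Gc N)"
proof -
  let ?G = "liftg Gc N"
  have dv: "dir Gc \<subseteq> verts Gc \<times> verts Gc" and bv: "bid Gc \<subseteq> verts Gc \<times> verts Gc"
    and sb: "sym (bid Gc)" and fv: "finite (verts Gc)" using c by (auto simp: cdmg_def)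
  have "dir ?G \<subseteq> inv_image less_than snd" by (auto simp: liftg_def)
  then have ac: "acyclic (dir ?G)" by (meson acyclic_subset wf_acyclic wf_inv_image wf_less_than)
  have sy: "sym (bid ?G)" using sb by (auto simp: liftg_def sym_def)
  have ad: "admg ?G" unfolding admg_def using ac sy dv bv fv by (auto simp: liftg_def)
  have fs: "fst ` verts ?G = verts Gc"
  proof
    show "fst ` verts ?G \<subseteq> verts Gc" by (auto simp: liftg_def)
    show "verts Gc \<subseteq> fst ` verts ?G"
    proof
      fix c assume "c \<in> verts Gc"
      then have "(c,0) \<in> verts ?G" using N by (simp add: liftg_def)
      then show "c \<in> fst ` verts ?G" by (metis fst_conv image_eqI)
    qed
  qed
  have dd: "dir Gc = map_prod fst fst ` dir ?G"
  proof
    show "dir Gc \<subseteq> map_prod fst fst ` dir ?G"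
    proof
      fix p assume "p \<in> dir Gc"
      then obtain a b where p: "p = (a,b)" "(a,b) \<in> dir Gc" by (cases p) auto
      then have "((a,0),(b,1)) \<in> dir ?G" using N by (simp add: liftg_simps)
      then show "p \<in> map_prod fst fst ` dir ?G" using p by (metis fst_conv map_prod_simp image_eqI)
    qed
    show "map_prod fst fst ` dir ?G \<subseteq> dir Gc" by (auto simp: liftg_def)
  qed
  have bb: "bid Gc = map_prod fst fst ` bid ?G"
  proof
    show "bid Gc \<subseteq> map_prod fst fst ` bid ?G"
    proof
      fix p assume "p \<in> bid Gc"
      then obtain a b where p: "p = (a,b)" "(a,b) \<in> bid Gc" by (cases p) auto
      then have "((a,0),(b,1)) \<in> bid ?G" using N by (simp add: liftg_simps)
      then show "p \<in> map_prod fst fst ` bid ?G" using p by (metis fst_conv map_prod_simp image_eqI)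
    qed
    show "map_prod fst fst ` bid ?G \<subseteq> bid Gc" by (auto simp: liftg_def)
  qed
  have so: "size_ok multi Gc ?G"
    unfolding size_ok_def
  proof (intro impI ballI)
    fix c assume "c \<in> verts Gc"
    then have "{v \<in> verts ?G. fst v = c} = (\<lambda>t. (c,t)) ` {..<N}" by (auto simp: liftg_def)
    moreover have "card ((\<lambda>t. (c,t)) ` {..<N}) = N" by (simp add: card_image inj_on_def)
    ultimately show "card {v \<in> verts ?G. fst v = c} \<ge> 2" using N by simp
  qed
  show ?thesis using ad fs dd bb so by (simp add: compatible_def)
qed


lemma final:
  fixes Gc :: "'c mgraph" and Af Bf :: "('c \<times> nat) mgraph \<Rightarrow> ('c \<times> nat) set"
  assumes c: "cdmg Gc" and sub: "CX \<subseteq> verts Gc" "CY \<subseteq> verts Gc" "CZ \<subseteq> verts Gc" "CW \<subseteq> verts Gc"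
  and nd: "\<not> dsep (mutilate Gc A B) CY CX (CZ \<union> CW)"
  and hd: "\<And>N u v s. (u,v) \<in> dir Gc \<Longrightarrow> v \<notin> A \<Longrightarrow> u \<notin> B \<Longrightarrow> Suc s + card (dir Gc) < N \<Longrightarrow>
            (v, Suc s) \<notin> Af (liftg Gc N) \<and> (u,s) \<notin> Bf (liftg Gc N)"
  and hb: "\<And>N u s. u \<notin> A \<Longrightarrow> u \<in> verts Gc \<Longrightarrow> s + card (dir Gc) < N \<Longrightarrow> (u,s) \<notin> Af (liftg Gc N)"
  shows "\<exists>G :: ('c \<times> nat) mgraph. compatible Gc G \<and> size_ok multi Gc G \<and>
          \<not> dsep (mutilate G (Af G) (Bf G)) (members G CY) (members G CX)
                 (members G CZ \<union> members G CW)"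
proof -
  let ?Hc = "mutilate Gc A B"
  obtain vs es where p: "path ?Hc vs es" "hd vs \<in> CY" "last vs \<in> CX"
      "\<not> blocked ?Hc (CZ \<union> CW) vs es"
    using nd unfolding dsep_def by blast
  define K where "K = card (dir Gc)"
  define N0 where "N0 = 2 * length es + K + 1"
  define N where "N = N0 + K + 1"
  define G where "G = liftg Gc N"
  let ?H = "mutilate G (Af G) (Bf G)"
  let ?Wv = "members G CZ \<union> members G CW"
  have dv: "dir Gc \<subseteq> verts Gc \<times> verts Gc" and bv: "bid Gc \<subseteq> verts Gc \<times> verts Gc"
    and fv: "finite (verts Gc)" using c by (auto simp: cdmg_def)
  have fd: "finite (dir Gc)" using dv fv by (meson finite_SigmaI finite_subset)
  have dsub: "dir ?Hc \<subseteq> dir Gc" by (auto simp: mutilate_def)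
  have fin: "finite (dir ?Hc)" using fd dsub finite_subset by blast
  have Kc: "card (dir ?Hc) \<le> K" unfolding K_def using fd dsub card_mono by blast
  have N0l: "2 * length es + K < N0" unfolding N0_def by simp
  have hv: "\<And>u s. u \<in> verts ?Hc \<Longrightarrow> s < N0 \<Longrightarrow> (u,s) \<in> verts ?H"
    by (simp add: mutilate_def G_def liftg_def N_def)
  have hdir: "\<And>u v s. (u,v) \<in> dir ?Hc \<Longrightarrow> Suc s < N0 \<Longrightarrow> ((u,s),(v,Suc s)) \<in> dir ?H"
  proof -
    fix u v s assume a: "(u,v) \<in> dir ?Hc" "Suc s < N0"
    then have e: "(u,v) \<in> dir Gc" "v \<notin> A" "u \<notin> B" by (auto simp: mutilate_def)
    have "Suc s + card (dir Gc) < N" using a(2) unfolding N_def K_def by simp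
    then have "(v, Suc s) \<notin> Af G \<and> (u,s) \<notin> Bf G" using hd[OF e] unfolding G_def by blast
    moreover have "((u,s),(v,Suc s)) \<in> dir G" using e a(2) unfolding G_def N_def
      by (simp add: liftg_simps)
    ultimately show "((u,s),(v,Suc s)) \<in> dir ?H" by (simp add: mutilate_def)
  qed
  have hbid: "\<And>u v s t. (u,v) \<in> bid ?Hc \<Longrightarrow> s < N0 \<Longrightarrow> t < N0 \<Longrightarrow> u \<noteq> v \<Longrightarrow> ((u,s),(v,t)) \<in> bid ?H"
  proof -
    fix u v s t assume a: "(u,v) \<in> bid ?Hc" "s < N0" "t < N0" "u \<noteq> v"
    then have e: "(u,v) \<in> bid Gc" "u \<notin> A" "v \<notin> A" by (auto simp: mutilate_def)
    have uv: "u \<in> verts Gc" "v \<in> verts Gc" using e bv by auto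
    have "s + card (dir Gc) < N" "t + card (dir Gc) < N" using a unfolding N_def K_def by simp_all
    then have "(u, s) \<notin> Af G \<and> (v,t) \<notin> Af G" using hb e uv unfolding G_def by blast
    moreover have "((u,s),(v,t)) \<in> bid G" using e a unfolding G_def N_def
      by (simp add: liftg_simps)
    ultimately show "((u,s),(v,t)) \<in> bid ?H" by (simp add: mutilate_def)
  qed
  have hW1: "\<And>u s. (u,s) \<in> ?Wv \<Longrightarrow> u \<in> CZ \<union> CW" unfolding G_def by (auto simp: members_liftg)
  have hW2: "\<And>u s. u \<in> CZ \<union> CW \<Longrightarrow> s < N0 \<Longrightarrow> (u,s) \<in> ?Wv"
    using sub unfolding G_def N_def by (auto simp: members_liftg)
  have m: "path ?H (liftp vs es) es \<and> \<not> blocked ?H ?Wv (liftp vs es) es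
     \<and> hd (liftp vs es) = (hd vs, tau es 0) \<and> last (liftp vs es) = (last vs, tau es (length es))
     \<and> tau es 0 < N0 \<and> tau es (length es) < N0"
    by (rule main[of "?Hc" vs es "CZ \<union> CW" K N0 "?H" "?Wv",
          OF p(1) p(4) fin Kc N0l hv hdir hbid hW1 hW2])
  have "hd (liftp vs es) \<in> members G CY" "last (liftp vs es) \<in> members G CX"
    using m p sub unfolding G_def N_def by (auto simp: members_liftg)
  then have "\<not> dsep ?H (members G CY) (members G CX) ?Wv" using m unfolding dsep_def by blast
  moreover have "compatible Gc G \<and> size_ok multi Gc G" unfolding G_def
    using compat[OF c, of N multi] unfolding N_def N0_def by simp
  ultimately show ?thesis by blast
qed


lemma nonanc_lift:
  assumes c: "cdmg Gc" and cw: "CW \<subseteq> verts Gc"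
  and u: "u \<notin> nonanc (mutilate Gc CZ {}) CX CW" and s: "s + card (dir Gc) < N"
  shows "(u,s) \<notin> nonanc (mutilate (liftg Gc N) (members (liftg Gc N) CZ) {})
            (members (liftg Gc N) CX) (members (liftg Gc N) CW)"
proof
  let ?G = "liftg Gc N"
  let ?R = "dir (mutilate Gc CZ {})"
  let ?R' = "dir (mutilate ?G (members ?G CZ) {})"
  assume a: "(u,s) \<in> nonanc (mutilate ?G (members ?G CZ) {}) (members ?G CX) (members ?G CW)"
  then have ux: "u \<in> CX" by (simp add: nonanc_def members_liftg)
  then obtain w where w: "w \<in> CW" "(u,w) \<in> ?R\<^sup>*" using u by (auto simp: nonanc_def)
  have dv: "dir Gc \<subseteq> verts Gc \<times> verts Gc" and fv: "finite (verts Gc)" using c by (auto simp: cdmg_def)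
  have fd: "finite (dir Gc)" using dv fv by (meson finite_SigmaI finite_subset)
  have dsub: "?R \<subseteq> dir Gc" by (auto simp: mutilate_def)
  have fin: "finite ?R" using fd dsub finite_subset by blast
  obtain k where k: "k \<le> card ?R" "(u,w) \<in> ?R ^^ k" using rtrancl_bounded[OF fin w(2)] by blast
  have "card ?R \<le> card (dir Gc)" using fd dsub card_mono by blast
  then have sk: "s + k < N" using k s by linarith
  have h: "\<And>a b t. (a,b) \<in> ?R \<Longrightarrow> Suc t < N \<Longrightarrow> ((a,t),(b,Suc t)) \<in> ?R'"
    by (auto simp: mutilate_def liftg_simps members_liftg)
  have "((u,s),(w,s+k)) \<in> ?R'\<^sup>*" using lift_pow[of ?R N ?R', OF h k(2) sk] by blast
  moreover have "(w, s+k) \<in> members ?G CW" using w cw sk by (auto simp: members_liftg)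
  ultimately show False using a by (auto simp: nonanc_def)
qed

theorem theorem4:
  fixes Gc :: "'c mgraph" and CX CY CZ CW :: "'c set" and multi :: bool
  assumes "cdmg Gc"
    and "CX \<subseteq> verts Gc" and "CY \<subseteq> verts Gc" and "CZ \<subseteq> verts Gc" and "CW \<subseteq> verts Gc"
    and "CX \<inter> CY = {}" and "CX \<inter> CZ = {}" and "CX \<inter> CW = {}"
    and "CY \<inter> CZ = {}" and "CY \<inter> CW = {}" and "CZ \<inter> CW = {}"
  shows
    "(\<not> dsep (mutilate Gc CZ {}) CY CX (CZ \<union> CW) \<longrightarrow>
       (\<exists>G :: ('c \<times> nat) mgraph. compatible Gc G \<and> size_ok multi Gc G \<and>
          \<not> dsep (mutilate G (members G CZ) {}) (members G CY) (members G CX)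
                 (members G CZ \<union> members G CW)))
   \<and> (\<not> dsep (mutilate Gc CZ CX) CY CX (CZ \<union> CW) \<longrightarrow>
       (\<exists>G :: ('c \<times> nat) mgraph. compatible Gc G \<and> size_ok multi Gc G \<and>
          \<not> dsep (mutilate G (members G CZ) (members G CX)) (members G CY) (members G CX)
                 (members G CZ \<union> members G CW)))
   \<and> (\<not> dsep (mutilate Gc (CZ \<union> nonanc (mutilate Gc CZ {}) CX CW) {}) CY CX (CZ \<union> CW) \<longrightarrow>
       (\<exists>G :: ('c \<times> nat) mgraph. compatible Gc G \<and> size_ok multi Gc G \<and>
          \<not> dsep (mutilate G (members G CZ \<union>
                     nonanc (mutilate G (members G CZ) {}) (members G CX) (members G CW)) {})
                 (members G CY) (members G CX) (members G CZ \<union> members G CW)))"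
proof (intro conjI impI)
  assume nd: "\<not> dsep (mutilate Gc CZ {}) CY CX (CZ \<union> CW)"
  show "\<exists>G :: ('c \<times> nat) mgraph. compatible Gc G \<and> size_ok multi Gc G \<and>
          \<not> dsep (mutilate G (members G CZ) {}) (members G CY) (members G CX)
                 (members G CZ \<union> members G CW)"
    by (rule final[where Af="\<lambda>G. members G CZ" and Bf="\<lambda>G. {}", OF assms(1-5) nd])
       (auto simp: members_liftg)
next
  assume nd: "\<not> dsep (mutilate Gc CZ CX) CY CX (CZ \<union> CW)"
  show "\<exists>G :: ('c \<times> nat) mgraph. compatible Gc G \<and> size_ok multi Gc G \<and>
          \<not> dsep (mutilate G (members G CZ) (members G CX)) (members G CY) (members G CX)
                 (members G CZ \<union> members G CW)"
    by (rule final[where Af="\<lambda>G. members G CZ" and Bf="\<lambda>G. members G CX", OF assms(1-5) nd])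
       (auto simp: members_liftg)
next
  assume nd: "\<not> dsep (mutilate Gc (CZ \<union> nonanc (mutilate Gc CZ {}) CX CW) {}) CY CX (CZ \<union> CW)"
  show "\<exists>G :: ('c \<times> nat) mgraph. compatible Gc G \<and> size_ok multi Gc G \<and>
          \<not> dsep (mutilate G (members G CZ \<union>
                     nonanc (mutilate G (members G CZ) {}) (members G CX) (members G CW)) {})
                 (members G CY) (members G CX) (members G CZ \<union> members G CW)"
  proof (rule final[where Af="\<lambda>G. members G CZ \<union>
                     nonanc (mutilate G (members G CZ) {}) (members G CX) (members G CW)"
                 and Bf="\<lambda>G. {}", OF assms(1-5) nd])
    fix N u v s
    assume "(u,v) \<in> dir Gc" "v \<notin> CZ \<union> nonanc (mutilate Gc CZ {}) CX CW" "u \<notin> {}"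
      "Suc s + card (dir Gc) < N"
    then show "(v, Suc s) \<notin> members (liftg Gc N) CZ \<union>
         nonanc (mutilate (liftg Gc N) (members (liftg Gc N) CZ) {}) (members (liftg Gc N) CX)
          (members (liftg Gc N) CW) \<and> (u, s) \<notin> {}"
      using nonanc_lift[OF assms(1) assms(5)] by (auto simp: members_liftg)
  next
    fix N u s
    assume "u \<notin> CZ \<union> nonanc (mutilate Gc CZ {}) CX CW" "u \<in> verts Gc"
      "s + card (dir Gc) < N"
    then show "(u, s) \<notin> members (liftg Gc N) CZ \<union>
         nonanc (mutilate (liftg Gc N) (members (liftg Gc N) CZ) {}) (members (liftg Gc N) CX)
          (members (liftg Gc N) CW)"
      using nonanc_lift[OF assms(1) assms(5)] by (auto simp: members_liftg)
  qed
qed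

end
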